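(* Let $N, J \ge 1$ be integers and let $F_1,\dots,F_J:\mathbb{R}_+^N\to\mathbb{R}_+$ be upper semicontinuous functions that are homogeneous of degree 1 (i.e. $F_j(\lambda x)=\lambda F_j(x)$ for all $\lambda\ge 0$, $x\in\mathbb{R}_+^N$). Define $F:\mathbb{R}_+^N\to\mathbb{R}_+$ by $$F(x)=\max\Big\{\sum_{j=1}^J F_j(x_j): x_j\in\mathbb{R}_+^N \text{ for all } j,\ \sum_{j=1}^J x_j=x\Big\}.$$ Let $w\in\mathbb{R}^N$ and suppose $x^*\in\arg\max_{x\ge 0}\,(F(x)-w\cdot x)$. Let $x_1^*,\dots,x_J^*\in\mathbb{R}_+^N$ be any vectors with $x^*=\sum_{j=1}^J x_j^*$ and $x_j^*\in\arg\max_{x\ge 0}\,(F_j(x)-w\cdot x)$ for every $j$. Let $C$ be the smallest convex cone containing $\{x_1^*,\dots,x_J^*\}$. Then $F(x)=w\cdot x$ for all $x\in C$.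
   Context: A production function is an upper semicontinuous function $\mathbb{R}_+^N\to\mathbb{R}_+$. The function $F$ defined in the claim (the maximum is attained) is called the aggregate production function of $F_1,\dots,F_J$. A set $C$ is a cone if $y\in C$, $\alpha\ge0$ imply $\alpha y\in C$; the smallest convex cone containing a finite set $\{y_j\}$ is $\{\sum_j\alpha_j y_j:\alpha_j\ge 0\}$. $x\ge 0$ means $x\in\mathbb{R}_+^N$. *)

theory Defs
  imports "HOL-Analysis.Analysis"
begin

text \<open>The nonnegative orthant R_+^N, with N given by the finite index type 'n.\<close>
definition nonneg_orthant :: "(real ^ 'n) set" where
  "nonneg_orthant = {x. \<forall>i. 0 \<le> x $ i}"

definition usc_on :: "('a::topological_space) set \<Rightarrow> ('a \<Rightarrow> real) \<Rightarrow> bool" where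
  "usc_on S f \<longleftrightarrow> (\<forall>a. openin (top_of_set S) {x \<in> S. f x < a})"

definition production_function :: "(real ^ 'n \<Rightarrow> real) \<Rightarrow> bool" where
  "production_function f \<longleftrightarrow> usc_on nonneg_orthant f \<and> (\<forall>x\<in>nonneg_orthant. 0 \<le> f x)"

text \<open>Aggregate production function of Fs 1, ..., Fs J (the supremum is attained, so it is
  the maximum of the paper).\<close>
definition aggregate :: "nat \<Rightarrow> (nat \<Rightarrow> real ^ 'n \<Rightarrow> real) \<Rightarrow> real ^ 'n \<Rightarrow> real" where
  "aggregate J Fs x = Sup {(\<Sum>j\<in>{1..J}. Fs j (xs j)) | xs.
       (\<forall>j\<in>{1..J}. xs j \<in> nonneg_orthant) \<and> (\<Sum>j\<in>{1..J}. xs j) = x}"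

definition is_argmax_nonneg :: "(real ^ 'n \<Rightarrow> real) \<Rightarrow> real ^ 'n \<Rightarrow> bool" where
  "is_argmax_nonneg g x \<longleftrightarrow> x \<in> nonneg_orthant \<and> (\<forall>y\<in>nonneg_orthant. g y \<le> g x)"

end

theory Submission
  imports Defs
begin

theorem theorem1:
  fixes J :: nat
    and Fs :: "nat \<Rightarrow> real ^ 'n \<Rightarrow> real"
    and w xstar :: "real ^ 'n"
    and xs :: "nat \<Rightarrow> real ^ 'n"
  assumes "J \<ge> 1"
    and prod: "\<And>j. j \<in> {1..J} \<Longrightarrow> production_function (Fs j)"
    and hom: "\<And>j lam x. j \<in> {1..J} \<Longrightarrow> lam \<ge> 0 \<Longrightarrow> x \<in> nonneg_orthant \<Longrightarrow>
                 Fs j (lam *\<^sub>R x) = lam * Fs j x"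
    and opt: "is_argmax_nonneg (\<lambda>x. aggregate J Fs x - w \<bullet> x) xstar"
    and decomp: "xstar = (\<Sum>j\<in>{1..J}. xs j)"
    and optj: "\<And>j. j \<in> {1..J} \<Longrightarrow> is_argmax_nonneg (\<lambda>x. Fs j x - w \<bullet> x) (xs j)"
  shows "\<forall>x \<in> {(\<Sum>j\<in>{1..J}. alpha j *\<^sub>R xs j) | alpha. \<forall>j\<in>{1..J}. alpha j \<ge> 0}.
           aggregate J Fs x = w \<bullet> x"
proof -
  have Fj0: "Fs j 0 = 0" if j: "j \<in> {1..J}" for j
  proof -
    have "xs j \<in> nonneg_orthant" using optj[OF j] by (simp add: is_argmax_nonneg_def)
    from hom[OF j, of 0 "xs j", OF _ this] show ?thesis by simp
  qed
  have le: "Fs j y \<le> w \<bullet> y" if j: "j \<in> {1..J}" and y: "y \<in> nonneg_orthant" for j y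
  proof -
    have xo: "xs j \<in> nonneg_orthant" and mx: "\<And>z. z \<in> nonneg_orthant \<Longrightarrow> Fs j z - w \<bullet> z \<le> Fs j (xs j) - w \<bullet> xs j"
      using optj[OF j] by (auto simp: is_argmax_nonneg_def)
    have "(2::real) *\<^sub>R xs j \<in> nonneg_orthant" using xo by (simp add: nonneg_orthant_def)
    from mx[OF this] have "2 * (Fs j (xs j) - w \<bullet> xs j) \<le> Fs j (xs j) - w \<bullet> xs j"
      using hom[OF j, of 2 "xs j"] xo by (simp add: algebra_simps)
    hence "Fs j (xs j) - w \<bullet> xs j \<le> 0" by simp
    with mx[OF y] show ?thesis by simp
  qed
  have eqj: "Fs j (xs j) = w \<bullet> xs j" if j: "j \<in> {1..J}" for j
  proof -
    have "0 \<in> nonneg_orthant" by (simp add: nonneg_orthant_def)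
    from optj[OF j] this have "Fs j 0 - w \<bullet> 0 \<le> Fs j (xs j) - w \<bullet> xs j"
      by (auto simp: is_argmax_nonneg_def)
    moreover have "xs j \<in> nonneg_orthant" using optj[OF j] by (simp add: is_argmax_nonneg_def)
    ultimately show ?thesis using le[OF j] Fj0[OF j] by force
  qed
  show ?thesis
  proof
    fix x assume "x \<in> {(\<Sum>j\<in>{1..J}. alpha j *\<^sub>R xs j) | alpha. \<forall>j\<in>{1..J}. alpha j \<ge> 0}"
    then obtain alpha where al: "\<forall>j\<in>{1..J}. alpha j \<ge> 0" and x: "x = (\<Sum>j\<in>{1..J}. alpha j *\<^sub>R xs j)"
      by blast
    let ?S = "{(\<Sum>j\<in>{1..J}. Fs j (ys j)) | ys.
       (\<forall>j\<in>{1..J}. ys j \<in> nonneg_orthant) \<and> (\<Sum>j\<in>{1..J}. ys j) = x}"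
    have xo: "xs j \<in> nonneg_orthant" if "j \<in> {1..J}" for j
      using optj[OF that] by (simp add: is_argmax_nonneg_def)
    have yo: "\<forall>j\<in>{1..J}. alpha j *\<^sub>R xs j \<in> nonneg_orthant"
      using al xo by (auto simp: nonneg_orthant_def)
    have "(\<Sum>j\<in>{1..J}. Fs j (alpha j *\<^sub>R xs j)) = (\<Sum>j\<in>{1..J}. w \<bullet> (alpha j *\<^sub>R xs j))"
      by (rule sum.cong) (use al xo hom eqj in auto)
    also have "\<dots> = w \<bullet> x" unfolding x by (simp add: inner_sum_right)
    finally have e: "w \<bullet> x = (\<Sum>j\<in>{1..J}. Fs j (alpha j *\<^sub>R xs j))" by simp
    have mem: "w \<bullet> x \<in> ?S"
      unfolding e mem_Collect_eq
      by (rule exI[of _ "\<lambda>j. alpha j *\<^sub>R xs j"]) (use yo x in simp)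
    have ub: "s \<le> w \<bullet> x" if "s \<in> ?S" for s
    proof -
      from that obtain ys where ys: "\<forall>j\<in>{1..J}. ys j \<in> nonneg_orthant" "(\<Sum>j\<in>{1..J}. ys j) = x"
        and s: "s = (\<Sum>j\<in>{1..J}. Fs j (ys j))" by blast
      have "s \<le> (\<Sum>j\<in>{1..J}. w \<bullet> ys j)" unfolding s by (rule sum_mono) (use ys le in auto)
      also have "\<dots> = w \<bullet> x" using ys(2) by (metis inner_sum_right)
      finally show ?thesis .
    qed
    have "Sup ?S = w \<bullet> x"
      by (rule cSup_eq_maximum) (use mem ub in auto)
    thus "aggregate J Fs x = w \<bullet> x" unfolding aggregate_def .
  qed
qed

end
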